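(* Let $X$ be a Banach space with a normalized $1$-unconditional basis $(e_i)_i$ not equivalent to the standard basis of $c_0$, and let $q\le p$ in $[1,\infty]$, $q<\infty$, be such that $X$ satisfies lower $p$ and upper $q$ estimates on block sequences with constant one. Let $\varepsilon>0$ and $d\in\mathbb{N}$. Let $P\subseteq\mathbb{N}$ satisfy $\psi_P(k)\ge\frac12(\psi(k)-1)$ for all $k\in\mathbb{N}$, and let $M=\{k_j\}_{j=1}^\infty\subseteq\mathbb{N}$ (with $k_1<k_2<\cdots$) satisfy \[\psi(k_{j+1})\geq\Big(\frac{8d^{1/q-1/p}}{\varepsilon}+2\Big)\psi(k_j)+1\quad\text{for all } j.\] Then for all $\bar m=(m_1,\dots,m_d),\bar n=(n_1,\dots,n_d)\in[M]^d$ with $m_1<n_1<m_2<n_2<\dots<m_d<n_d$, all $(\lambda_s)_{s=1}^d\subseteq\mathbb{R}$, and each $Q\in\{P,P^c\}$: \[\Big\|\sum_{s=1}^d\lambda_s1_{(n_{s-1},n_s]\cap Q}\Big\|_X\le1\implies\Big\|\sum_{s=1}^d\lambda_s1_{(n_{s-1},m_s]}\Big\|_X\le\frac\varepsilon4,\] \[\Big\|\sum_{s=1}^d\lambda_s1_{(m_{s-1},m_s]\cap Q}\Big\|_X\le1\implies\Big\|\sum_{s=1}^d\lambda_s1_{(m_{s-1},n_{s-1}]}\Big\|_X\le\frac\varepsilon4,\] where $m_0=n_0=0$.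
   Context: Identify finitely supported real sequences with elements of $X$ via $(e_i)$; for finite $A\subseteq\mathbb{N}$, $1_A=\sum_{i\in A}e_i$, and $1_{(a,b]}$ means $1_{\{i\in\mathbb{N}:a<i\le b\}}$. $\psi(k)=\|1_{[1,k]}\|_X$; $\psi_P(k)=\min\{\|1_{[1,k]\cap P}\|_X,\|1_{[1,k]\cap P^c}\|_X\}$, $P^c=\mathbb{N}\setminus P$. $[M]^d$ is the set of $d$-tuples $(n_1,\dots,n_d)\in M^d$ with $n_1<\dots<n_d$. A block sequence $(x_i)_{i=1}^n$ is one with $x_i\in\mathrm{span}\{e_j: s_i\le j<s_{i+1}\}$ for some $s_1<\dots<s_{n+1}$. Lower $p$ and upper $q$ estimates with constant one: $(\sum_i\|x_i\|_X^p)^{1/p}\le\|\sum_ix_i\|_X\le(\sum_i\|x_i\|_X^q)^{1/q}$ for every block sequence (with the usual modification for $p=\infty$). Normalized: $\|e_i\|_X=1$; $1$-unconditional: $\|\sum a_ie_i\|\le\|\sum b_ie_i\|$ whenever $|a_i|\le|b_i|$. *)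

theory Defs
  imports "HOL-Analysis.Analysis" "HOL-Library.Extended_Real"
begin

text \<open>Elements of X are identified with finitely supported real sequences indexed by
  the positive naturals (basis vectors e_i, i >= 1); index 0 is not used.
  The Banach space X is the completion of this normed space; all statements only
  involve finitely supported vectors.\<close>

definition fsvec :: "(nat \<Rightarrow> real) \<Rightarrow> bool" where
  "fsvec x \<longleftrightarrow> finite {i. x i \<noteq> 0} \<and> x 0 = 0"

definition is_norm_c00 :: "((nat \<Rightarrow> real) \<Rightarrow> real) \<Rightarrow> bool" where
  "is_norm_c00 N \<longleftrightarrow>
     (\<forall>x. fsvec x \<longrightarrow> 0 \<le> N x \<and> (N x = 0 \<longleftrightarrow> x = (\<lambda>_. 0))) \<and>
     (\<forall>x c. fsvec x \<longrightarrow> N (\<lambda>i. c * x i) = \<bar>c\<bar> * N x) \<and>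
     (\<forall>x y. fsvec x \<longrightarrow> fsvec y \<longrightarrow> N (\<lambda>i. x i + y i) \<le> N x + N y)"

definition basis_vec :: "nat \<Rightarrow> nat \<Rightarrow> real" ("e") where
  "e j = (\<lambda>i. if i = j then 1 else 0)"

definition normalized :: "((nat \<Rightarrow> real) \<Rightarrow> real) \<Rightarrow> bool" where
  "normalized N \<longleftrightarrow> (\<forall>j\<ge>1. N (e j) = 1)"

definition one_unconditional :: "((nat \<Rightarrow> real) \<Rightarrow> real) \<Rightarrow> bool" where
  "one_unconditional N \<longleftrightarrow>
     (\<forall>a b. fsvec a \<longrightarrow> fsvec b \<longrightarrow> (\<forall>i. \<bar>a i\<bar> \<le> \<bar>b i\<bar>) \<longrightarrow> N a \<le> N b)"

definition supnorm :: "(nat \<Rightarrow> real) \<Rightarrow> real" where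
  "supnorm a = Max (insert 0 ((\<lambda>i. \<bar>a i\<bar>) ` {i. a i \<noteq> 0}))"

definition equiv_c0 :: "((nat \<Rightarrow> real) \<Rightarrow> real) \<Rightarrow> bool" where
  "equiv_c0 N \<longleftrightarrow> (\<exists>c C. 0 < c \<and> 0 < C \<and>
     (\<forall>a. fsvec a \<longrightarrow> c * supnorm a \<le> N a \<and> N a \<le> C * supnorm a))"

definition block_seq :: "nat \<Rightarrow> (nat \<Rightarrow> nat \<Rightarrow> real) \<Rightarrow> bool" where
  "block_seq n x \<longleftrightarrow> (\<exists>s :: nat \<Rightarrow> nat. strict_mono s \<and> 1 \<le> s 0 \<and>
     (\<forall>i<n. \<forall>j. x i j \<noteq> 0 \<longrightarrow> s i \<le> j \<and> j < s (Suc i)))"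

definition vsum :: "nat \<Rightarrow> (nat \<Rightarrow> nat \<Rightarrow> real) \<Rightarrow> nat \<Rightarrow> real" where
  "vsum n x = (\<lambda>j. \<Sum>i<n. x i j)"

definition lower_est :: "((nat \<Rightarrow> real) \<Rightarrow> real) \<Rightarrow> ereal \<Rightarrow> bool" where
  "lower_est N p \<longleftrightarrow> (\<forall>n x. block_seq n x \<longrightarrow>
     (if p = \<infinity> then (\<forall>i<n. N (x i) \<le> N (vsum n x))
      else (\<Sum>i<n. N (x i) powr real_of_ereal p) powr (1 / real_of_ereal p) \<le> N (vsum n x)))"

definition upper_est :: "((nat \<Rightarrow> real) \<Rightarrow> real) \<Rightarrow> real \<Rightarrow> bool" where
  "upper_est N q \<longleftrightarrow> (\<forall>n x. block_seq n x \<longrightarrow>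
     N (vsum n x) \<le> (\<Sum>i<n. N (x i) powr q) powr (1 / q))"

definition inv_ereal :: "ereal \<Rightarrow> real" where
  "inv_ereal p = (if p = \<infinity> then 0 else 1 / real_of_ereal p)"

definition psi :: "((nat \<Rightarrow> real) \<Rightarrow> real) \<Rightarrow> nat \<Rightarrow> real" where
  "psi N k = N (indicator {1..k})"

definition psiP :: "((nat \<Rightarrow> real) \<Rightarrow> real) \<Rightarrow> nat set \<Rightarrow> nat \<Rightarrow> real" where
  "psiP N P k = min (N (indicator ({1..k} \<inter> P))) (N (indicator ({1..k} - P)))"

end

theory Submission
  imports Defs
begin


lemma fsvecI: "finite B \<Longrightarrow> 0 \<notin> B \<Longrightarrow> (\<And>i. i \<notin> B \<Longrightarrow> x i = 0) \<Longrightarrow> fsvec x"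
  unfolding fsvec_def by (metis (mono_tags, lifting) finite_subset mem_Collect_eq subsetI)

lemma blocks:
  fixes a :: "nat \<Rightarrow> nat" and T :: "nat \<Rightarrow> nat set" and lam :: "nat \<Rightarrow> real"
  assumes a: "\<forall>s\<in>{1..d}. a (s - 1) < a s" and T: "\<forall>s\<in>{1..d}. T s \<subseteq> {a (s - 1)<..a s}"
  defines "x \<equiv> (\<lambda>i j. lam (Suc i) * indicator (T (Suc i)) j)"
  shows "block_seq d x" "vsum d x = (\<lambda>j. \<Sum>s=1..d. lam s * indicator (T s) j)"
    "\<And>i. i < d \<Longrightarrow> fsvec (x i)" "fsvec (vsum d x)"
    "\<And>i. i < d \<Longrightarrow> x i = (\<lambda>j. lam (Suc i) * indicator (T (Suc i)) j)"
proof -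
  define s where "s i = a (min i d) + 1 + (i - d)" for i
  have "strict_mono s"
  proof (rule strict_mono_Suc_iff[THEN iffD2], intro allI)
    fix i
    show "s i < s (Suc i)"
    proof (cases "i < d")
      case True
      then have "a i < a (Suc i)" using a[rule_format, of "Suc i"] by auto
      then show ?thesis using True by (simp add: s_def min_def)
    next
      case False
      then show ?thesis by (simp add: s_def min_def Suc_diff_le)
    qed
  qed
  moreover have "\<forall>i<d. \<forall>j. x i j \<noteq> 0 \<longrightarrow> s i \<le> j \<and> j < s (Suc i)"
  proof (intro allI impI)
    fix i j assume i: "i < d" and "x i j \<noteq> 0"
    then have "j \<in> T (Suc i)" by (auto simp: x_def indicator_def split: if_splits)
    then have "a i < j \<and> j \<le> a (Suc i)" using T[rule_format, of "Suc i"] i by auto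
    then show "s i \<le> j \<and> j < s (Suc i)" using i by (simp add: s_def min_def)
  qed
  ultimately show "block_seq d x" unfolding block_seq_def by (intro exI[of _ s]) (simp add: s_def)
  have "(\<Sum>s=1..d. f s) = (\<Sum>i<d. f (Suc i))" for f :: "nat \<Rightarrow> real"
  proof -
    have "{1..d} = Suc ` {..<d}" by (simp add: image_Suc_lessThan)
    then show ?thesis by (simp add: sum.reindex)
  qed
  then show vs: "vsum d x = (\<lambda>j. \<Sum>s=1..d. lam s * indicator (T s) j)"
    by (simp add: vsum_def x_def)
  have TB: "T s \<subseteq> {1..a d}" if "s \<in> {1..d}" for s
  proof -
    have "mono_on {0..d} a"
    proof (rule mono_onI)
      fix u v assume "u \<in> {0..d}" "v \<in> {0..d}" "u \<le> v"
      then show "a u \<le> a v"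
      proof (induction v)
        case 0 then show ?case by simp
      next
        case (Suc v)
        then show ?case using a[rule_format, of "Suc v"] by (cases "u = Suc v") auto
      qed
    qed
    then have "a s \<le> a d" using that by (simp add: mono_onD)
    then show ?thesis using T that by fastforce
  qed
  show fx: "fsvec (x i)" if "i < d" for i
    by (rule fsvecI[of "{1..a d}"]) (use TB[of "Suc i"] that in \<open>auto simp: x_def indicator_def\<close>)
  show "fsvec (vsum d x)" unfolding vs
    apply (rule fsvecI[of "{1..a d}"])
      apply simp
     apply simp
    apply (rule sum.neutral)
    using TB by (force simp: indicator_def)
  show "\<And>i. i < d \<Longrightarrow> x i = (\<lambda>j. lam (Suc i) * indicator (T (Suc i)) j)" by (simp add: x_def)
qed



lemma jensen_pow:
  fixes b :: "'a \<Rightarrow> real"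
  assumes S: "finite S" and b: "\<And>i. i \<in> S \<Longrightarrow> b i \<ge> 0" and t: "t \<ge> 1"
  shows "(\<Sum>i\<in>S. b i) powr t \<le> real (card S) powr (t - 1) * (\<Sum>i\<in>S. b i powr t)"
proof -
  define S' where "S' = {i\<in>S. b i > 0}"
  have fS': "finite S'" using S by (simp add: S'_def)
  have sub: "S' \<subseteq> S" by (auto simp: S'_def)
  have e1: "(\<Sum>i\<in>S. b i) = (\<Sum>i\<in>S'. b i)"
    by (rule sum.mono_neutral_right[OF S sub]) (use b in \<open>force simp: S'_def\<close>)
  have e2: "(\<Sum>i\<in>S. b i powr t) = (\<Sum>i\<in>S'. b i powr t)"
    by (rule sum.mono_neutral_right[OF S sub]) (use b t in \<open>force simp: S'_def\<close>)
  have nn: "0 \<le> (\<Sum>i\<in>S'. b i powr t)" by (simp add: sum_nonneg)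
  show ?thesis
  proof (cases "S' = {}")
    case True
    then show ?thesis using e1 e2 t by simp
  next
    case False
    define c where "c = real (card S')"
    have c1: "c \<ge> 1" using False fS' unfolding c_def by (metis One_nat_def Suc_leI card_gt_0_iff of_nat_1 of_nat_le_iff)
    have "(\<lambda>x. x powr t) (\<Sum>i\<in>S'. (1/c) *\<^sub>R b i) \<le> (\<Sum>i\<in>S'. (1/c) * (b i powr t))"
      by (rule convex_on_sum[OF fS' False powr_convex[OF t]]) (use False fS' in \<open>auto simp: c_def S'_def card_gt_0_iff\<close>)
    hence "((\<Sum>i\<in>S'. b i) / c) powr t \<le> (\<Sum>i\<in>S'. b i powr t) / c"
      by (simp add: sum_divide_distrib[symmetric] sum_distrib_left[symmetric] divide_inverse mult.commute)
    hence "(\<Sum>i\<in>S'. b i) powr t / c powr t \<le> (\<Sum>i\<in>S'. b i powr t) / c"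
      using c1 by (simp add: powr_divide sum_nonneg less_imp_le S'_def)
    hence "(\<Sum>i\<in>S'. b i) powr t \<le> c powr t * ((\<Sum>i\<in>S'. b i powr t) / c)"
      using c1 by (simp add: divide_le_eq mult.commute)
    also have "c powr t * ((\<Sum>i\<in>S'. b i powr t) / c) = c powr (t - 1) * (\<Sum>i\<in>S'. b i powr t)"
      using c1 by (simp add: powr_diff)
    also have "\<dots> \<le> real (card S) powr (t - 1) * (\<Sum>i\<in>S'. b i powr t)"
      apply (rule mult_right_mono[OF _ nn])
      apply (rule powr_mono2) using t c1 card_mono[OF S sub] by (auto simp: c_def)
    finally show ?thesis using e1 e2 by simp
  qed
qed

lemma power_mean:
  fixes a :: "'a \<Rightarrow> real"
  assumes S: "finite S" and a: "\<And>i. i \<in> S \<Longrightarrow> a i \<ge> 0" and q: "1 \<le> q" and qr: "q \<le> r"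
  shows "(\<Sum>i\<in>S. a i powr q) powr (1/q) \<le> real (card S) powr (1/q - 1/r) * (\<Sum>i\<in>S. a i powr r) powr (1/r)"
proof -
  have t: "r / q \<ge> 1" using q qr by simp
  have J: "(\<Sum>i\<in>S. a i powr q) powr (r/q) \<le> real (card S) powr (r/q - 1) * (\<Sum>i\<in>S. (a i powr q) powr (r/q))"
    by (rule jensen_pow[OF S _ t]) simp
  have "(\<Sum>i\<in>S. (a i powr q) powr (r/q)) = (\<Sum>i\<in>S. a i powr r)"
    using q by (simp add: powr_powr)
  with J have J2: "(\<Sum>i\<in>S. a i powr q) powr (r/q) \<le> real (card S) powr (r/q - 1) * (\<Sum>i\<in>S. a i powr r)" by simp
  have "((\<Sum>i\<in>S. a i powr q) powr (r/q)) powr (1/r) \<le> (real (card S) powr (r/q - 1) * (\<Sum>i\<in>S. a i powr r)) powr (1/r)"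
    by (rule powr_mono2) (use J2 q qr in auto)
  also have "\<dots> = real (card S) powr ((r/q - 1) * (1/r)) * (\<Sum>i\<in>S. a i powr r) powr (1/r)"
    by (simp add: powr_mult powr_powr sum_nonneg)
  also have "(r/q - 1) * (1/r) = 1/q - 1/r" using q qr by (simp add: field_simps)
  finally show ?thesis using q qr by (simp add: powr_powr)
qed


lemma core:
  fixes N :: "(nat \<Rightarrow> real) \<Rightarrow> real" and p :: ereal
  assumes pq: "1 \<le> q" "ereal q \<le> p"
    and low: "lower_est N p" and up: "upper_est N q"
    and eps: "\<epsilon> > 0" and d: "d \<ge> 1"
    and bx: "block_seq d x" and byy: "block_seq d y"
    and X: "\<forall>i<d. N (x i) \<ge> (4 * (real d powr (1 / q - inv_ereal p)) / \<epsilon>) * A i"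
    and Y: "\<forall>i<d. N (y i) \<le> A i" and Y0: "\<forall>i<d. 0 \<le> N (y i)"
    and A0: "\<forall>i<d. 0 \<le> A i"
    and Sx: "N (vsum d x) \<le> 1"
  shows "N (vsum d y) \<le> \<epsilon> / 4"
proof -
  define D where "D = real d powr (1 / q - inv_ereal p)"
  define K where "K = 4 * D / \<epsilon>"
  have Dpos: "D > 0" using d by (simp add: D_def)
  have Kpos: "K > 0" using Dpos eps by (simp add: K_def)
  have card: "card {..<d} = d" by simp
  have upy: "N (vsum d y) \<le> (\<Sum>i<d. N (y i) powr q) powr (1 / q)"
    using up by - (rule upper_est_def[THEN iffD1, rule_format, OF _ byy], simp)
  also have "\<dots> \<le> (\<Sum>i<d. A i powr q) powr (1 / q)"
    using Y Y0 pq by (intro powr_mono2 sum_mono sum_nonneg) auto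
  finally have U: "N (vsum d y) \<le> (\<Sum>i<d. A i powr q) powr (1 / q)" .
  show ?thesis
  proof (cases "p = \<infinity>")
    case True
    have "\<forall>i<d. N (x i) \<le> N (vsum d x)"
      using low[unfolded lower_est_def, rule_format, OF bx] True by simp
    hence Ab: "\<forall>i<d. A i \<le> 1 / K"
      using X Sx Kpos unfolding K_def D_def[symmetric] by (smt (verit) mult.commute pos_le_divide_eq)
    have "(\<Sum>i<d. A i powr q) \<le> (\<Sum>i<d. (1/K) powr q)"
      using Ab A0 pq by (intro sum_mono powr_mono2) auto
    hence "(\<Sum>i<d. A i powr q) powr (1/q) \<le> (real d * (1/K) powr q) powr (1/q)"
      using pq by (intro powr_mono2) (auto simp: sum_nonneg)
    also have "\<dots> = real d powr (1/q) * (1/K)"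
      using pq Kpos by (simp add: powr_mult powr_powr)
    also have "\<dots> = \<epsilon> / 4"
      using True Dpos eps by (simp add: K_def D_def inv_ereal_def)
    finally show ?thesis using U by simp
  next
    case False
    obtain r where pr: "p = ereal r" using False pq(2) by (cases p) auto
    have qr: "q \<le> r" using pq pr by simp
    have ip: "inv_ereal p = 1 / r" using pr by (simp add: inv_ereal_def)
    have L: "(\<Sum>i<d. N (x i) powr r) powr (1 / r) \<le> N (vsum d x)"
      using low[unfolded lower_est_def, rule_format, OF bx] False pr by simp
    have KA: "\<forall>i<d. 0 \<le> K * A i" using A0 Kpos by simp
    have XK: "\<forall>i<d. K * A i \<le> N (x i)" using X by (simp add: K_def D_def)
    have "(\<Sum>i<d. (K * A i) powr r) \<le> (\<Sum>i<d. N (x i) powr r)"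
      using XK KA qr pq by (intro sum_mono powr_mono2) auto
    hence "(\<Sum>i<d. (K * A i) powr r) powr (1/r) \<le> (\<Sum>i<d. N (x i) powr r) powr (1/r)"
      using qr pq by (intro powr_mono2) (auto intro!: sum_nonneg)
    also have "(\<Sum>i<d. (K * A i) powr r) = K powr r * (\<Sum>i<d. A i powr r)"
      using A0 Kpos by (simp add: powr_mult sum_distrib_left)
    also have "(K powr r * (\<Sum>i<d. A i powr r)) powr (1/r) = K * (\<Sum>i<d. A i powr r) powr (1/r)"
      using Kpos qr pq by (simp add: powr_mult powr_powr sum_nonneg)
    finally have "K * (\<Sum>i<d. A i powr r) powr (1/r) \<le> 1" using L Sx by simp
    hence B: "(\<Sum>i<d. A i powr r) powr (1/r) \<le> 1 / K" using Kpos by (simp add: field_simps)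
    have "(\<Sum>i<d. A i powr q) powr (1 / q) \<le> real d powr (1/q - 1/r) * (\<Sum>i<d. A i powr r) powr (1/r)"
      using power_mean[of "{..<d}" A q r] A0 pq qr by simp
    also have "\<dots> \<le> D * (1 / K)"
      using mult_left_mono[OF B less_imp_le[OF Dpos]] by (simp add: D_def ip)
    also have "\<dots> = \<epsilon> / 4" using Dpos eps by (simp add: K_def)
    finally show ?thesis using U by simp
  qed
qed



theorem lemma3p2:
  fixes N :: "(nat \<Rightarrow> real) \<Rightarrow> real"
    and p :: ereal and q :: real and \<epsilon> :: real and d :: nat
    and P :: "nat set" and k :: "nat \<Rightarrow> nat"
  assumes norm: "is_norm_c00 N"
    and normal: "normalized N"
    and uncond: "one_unconditional N"
    and not_c0: "\<not> equiv_c0 N"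
    and pq: "1 \<le> q" "ereal q \<le> p"
    and low: "lower_est N p"
    and up: "upper_est N q"
    and eps: "\<epsilon> > 0"
    and d: "d \<ge> 1"
    and Pprop: "\<forall>j\<ge>1. psiP N P j \<ge> (psi N j - 1) / 2"
    and kmono: "strict_mono k" and k0: "k 0 \<ge> 1"
    and kgrowth: "\<forall>j. psi N (k (Suc j)) \<ge>
        (8 * real d powr (1 / q - inv_ereal p) / \<epsilon> + 2) * psi N (k j) + 1"
  shows "\<forall>m n :: nat \<Rightarrow> nat. \<forall>lam :: nat \<Rightarrow> real. \<forall>Q \<in> {P, - P}.
     (m 0 = 0 \<and> n 0 = 0 \<and> (\<forall>s\<in>{1..d}. m s \<in> range k \<and> n s \<in> range k) \<and>
      (\<forall>s\<in>{1..d}. n (s - 1) < m s \<and> m s < n s)) \<longrightarrow>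
     (N (\<lambda>i. \<Sum>s=1..d. lam s * indicator ({n (s - 1)<..n s} \<inter> Q) i) \<le> 1 \<longrightarrow>
        N (\<lambda>i. \<Sum>s=1..d. lam s * indicator {n (s - 1)<..m s} i) \<le> \<epsilon> / 4) \<and>
     (N (\<lambda>i. \<Sum>s=1..d. lam s * indicator ({m (s - 1)<..m s} \<inter> Q) i) \<le> 1 \<longrightarrow>
        N (\<lambda>i. \<Sum>s=1..d. lam s * indicator {m (s - 1)<..n (s - 1)} i) \<le> \<epsilon> / 4)"
proof -
  define D where "D = real d powr (1 / q - inv_ereal p)"
  define K where "K = 4 * D / \<epsilon>"
  have Dpos: "D > 0" using d by (simp add: D_def)
  have Kpos: "K > 0" using Dpos eps by (simp add: K_def)
  have fsv_ind: "fsvec (indicator A)" if "A \<subseteq> {1..b}" for A :: "nat set" and b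
    by (rule fsvecI[of "{1..b}"]) (use that in \<open>auto simp: indicator_def\<close>)
  have Nnn: "fsvec x \<Longrightarrow> 0 \<le> N x" for x using norm by (simp add: is_norm_c00_def)
  have scale: "fsvec f \<Longrightarrow> N (\<lambda>j. c * f j) = \<bar>c\<bar> * N f" for f c
    using norm by (simp add: is_norm_c00_def)
  have tri: "fsvec f \<Longrightarrow> fsvec g \<Longrightarrow> N (\<lambda>j. f j + g j) \<le> N f + N g" for f g
    using norm by (simp add: is_norm_c00_def)
  have indle: "N (indicator A) \<le> psi N b" if "A \<subseteq> {1..b}" for A :: "nat set" and b
    unfolding psi_def
    by (rule uncond[unfolded one_unconditional_def, rule_format])
       (use that in \<open>auto intro!: fsv_ind simp: indicator_def\<close>)
  have psi0: "0 \<le> psi N b" for b unfolding psi_def by (rule Nnn, rule fsv_ind) auto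
  have psimono: "a \<le> b \<Longrightarrow> psi N a \<le> psi N b" for a b
    unfolding psi_def[of N a] by (rule indle) auto
  have growth: "psi N y \<ge> (2 * K + 2) * psi N x + 1" if xyr: "x \<in> range k" "y \<in> range k" "x < y" for x y
  proof -
    obtain i j where ij: "x = k i" "y = k j" using xyr by auto
    have "i < j" using xyr ij kmono by (metis not_less_iff_gr_or_eq strict_mono_less)
    hence "k (Suc i) \<le> k j" using kmono by (simp add: Suc_le_eq strict_mono_less_eq)
    hence "psi N (k (Suc i)) \<le> psi N y" using ij psimono by simp
    moreover have "2 * K + 2 = 8 * real d powr (1 / q - inv_ereal p) / \<epsilon> + 2"
      by (simp add: K_def D_def)
    ultimately show ?thesis using kgrowth[rule_format, of i] ij by simp
  qed
  have Qlow: "N (indicator ({1..j} \<inter> Q)) \<ge> (psi N j - 1) / 2" if "Q \<in> {P, -P}" "j \<ge> 1" for Q j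
  proof -
    have "psiP N P j \<le> N (indicator ({1..j} \<inter> Q))"
      using that(1) unfolding psiP_def by (auto simp: Diff_eq)
    then show ?thesis using Pprop that(2) by force
  qed
  have qblock: "N (indicator ({a<..b} \<inter> Q)) \<ge> K * psi N c"
    if Q: "Q \<in> {P, -P}" and lt: "a < c" "c < b" and rk: "c \<in> range k" "b \<in> range k" for Q a b c
  proof -
    have e: "(indicator ({1..b} \<inter> Q) :: nat \<Rightarrow> real) = (\<lambda>i. indicator ({a<..b} \<inter> Q) i + indicator ({1..a} \<inter> Q) i)"
      using lt by (auto simp: indicator_def fun_eq_iff)
    have "N (indicator ({1..b} \<inter> Q)) \<le> N (indicator ({a<..b} \<inter> Q)) + N (indicator ({1..a} \<inter> Q))"
      unfolding e by (rule tri; rule fsv_ind[of _ b]) (use lt in auto)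
    also have "N (indicator ({1..a} \<inter> Q)) \<le> psi N c"
      using indle[of "{1..a} \<inter> Q" a] psimono[of a c] lt by auto
    finally have "N (indicator ({1..b} \<inter> Q)) \<le> N (indicator ({a<..b} \<inter> Q)) + psi N c" by simp
    moreover have "N (indicator ({1..b} \<inter> Q)) \<ge> (psi N b - 1) / 2" using Qlow[OF Q, of b] lt by simp
    moreover have "psi N b \<ge> (2 * K + 2) * psi N c + 1" using growth rk lt by simp
    ultimately show ?thesis by (simp add: algebra_simps)
  qed
  show ?thesis
  proof (intro allI ballI impI)
    fix m n :: "nat \<Rightarrow> nat" and lam :: "nat \<Rightarrow> real" and Q
    assume Q: "Q \<in> {P, -P}"
    assume H: "m 0 = 0 \<and> n 0 = 0 \<and> (\<forall>s\<in>{1..d}. m s \<in> range k \<and> n s \<in> range k) \<and>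
      (\<forall>s\<in>{1..d}. n (s - 1) < m s \<and> m s < n s)"
    have m0: "m 0 = 0" and n0: "n 0 = 0" and rng: "\<forall>s\<in>{1..d}. m s \<in> range k \<and> n s \<in> range k"
      and ord: "\<forall>s\<in>{1..d}. n (s - 1) < m s \<and> m s < n s" using H by auto
    have nord: "\<forall>s\<in>{1..d}. n (s - 1) < n s" using ord by force
    have mord: "\<forall>s\<in>{1..d}. m (s - 1) < m s"
    proof
      fix s assume s: "s \<in> {1..d}"
      show "m (s - 1) < m s"
      proof (cases "s = 1")
        case True then show ?thesis using m0 ord[rule_format, of 1] s by auto
      next
        case False
        then have "s - 1 \<in> {1..d}" using s by auto
        then have "m (s - 1) < n (s - 1)" using ord by auto
        then show ?thesis using ord s by force
      qed
    qed
    note bx1 = blocks[where d=d and a=n and T="\<lambda>s. {n (s - 1)<..n s} \<inter> Q" and lam=lam, OF nord]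
    note by1 = blocks[where d=d and a=n and T="\<lambda>s. {n (s - 1)<..m s}" and lam=lam, OF nord]
    note bx2 = blocks[where d=d and a=m and T="\<lambda>s. {m (s - 1)<..m s} \<inter> Q" and lam=lam, OF mord]
    note by2 = blocks[where d=d and a=m and T="\<lambda>s. {m (s - 1)<..n (s - 1)}" and lam=lam, OF mord]
    have c1: "\<forall>s\<in>{1..d}. {n (s - 1)<..n s} \<inter> Q \<subseteq> {n (s - 1)<..n s}" by auto
    have c2: "\<forall>s\<in>{1..d}. {n (s - 1)<..m s} \<subseteq> {n (s - 1)<..n s}" using ord by fastforce
    have c3: "\<forall>s\<in>{1..d}. {m (s - 1)<..m s} \<inter> Q \<subseteq> {m (s - 1)<..m s}" by auto
    have c4: "\<forall>s\<in>{1..d}. {m (s - 1)<..n (s - 1)} \<subseteq> {m (s - 1)<..m s}" using ord by fastforce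
    show "(N (\<lambda>i. \<Sum>s=1..d. lam s * indicator ({n (s - 1)<..n s} \<inter> Q) i) \<le> 1 \<longrightarrow>
        N (\<lambda>i. \<Sum>s=1..d. lam s * indicator {n (s - 1)<..m s} i) \<le> \<epsilon> / 4) \<and>
     (N (\<lambda>i. \<Sum>s=1..d. lam s * indicator ({m (s - 1)<..m s} \<inter> Q) i) \<le> 1 \<longrightarrow>
        N (\<lambda>i. \<Sum>s=1..d. lam s * indicator {m (s - 1)<..n (s - 1)} i) \<le> \<epsilon> / 4)"
    proof (intro conjI impI)
      assume S: "N (\<lambda>i. \<Sum>s=1..d. lam s * indicator ({n (s - 1)<..n s} \<inter> Q) i) \<le> 1"
      have "N (vsum d (\<lambda>i j. lam (Suc i) * indicator {n (Suc i - 1)<..m (Suc i)} j)) \<le> \<epsilon> / 4"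
      proof (rule core[OF pq low up eps d bx1(1)[OF c1] by1(1)[OF c2],
            where A = "\<lambda>i. \<bar>lam (Suc i)\<bar> * psi N (m (Suc i))"], unfold D_def[symmetric] K_def[symmetric])
        show "\<forall>i<d. K * (\<bar>lam (Suc i)\<bar> * psi N (m (Suc i)))
           \<le> N (\<lambda>j. lam (Suc i) * indicator ({n (Suc i - 1)<..n (Suc i)} \<inter> Q) j)"
        proof (intro allI impI)
          fix i assume i: "i < d"
          have si: "Suc i \<in> {1..d}" using i by auto
          have kb: "K * psi N (m (Suc i)) \<le> N (indicator ({n i<..n (Suc i)} \<inter> Q))"
            using qblock[OF Q, of "n i" "m (Suc i)" "n (Suc i)"] ord[rule_format, OF si] rng[rule_format, OF si] by simp
          moreover have "N (\<lambda>j. lam (Suc i) * indicator ({n i<..n (Suc i)} \<inter> Q) j)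
              = \<bar>lam (Suc i)\<bar> * N (indicator ({n i<..n (Suc i)} \<inter> Q))"
            by (rule scale, rule fsv_ind[of _ "n (Suc i)"]) auto
          ultimately show "K * (\<bar>lam (Suc i)\<bar> * psi N (m (Suc i)))
           \<le> N (\<lambda>j. lam (Suc i) * indicator ({n (Suc i - 1)<..n (Suc i)} \<inter> Q) j)"
            using mult_left_mono[OF kb abs_ge_zero] by (simp add: mult.left_commute)
        qed
        show "\<forall>i<d. N (\<lambda>j. lam (Suc i) * indicator {n (Suc i - 1)<..m (Suc i)} j)
            \<le> \<bar>lam (Suc i)\<bar> * psi N (m (Suc i))"
        proof (intro allI impI)
          fix i assume i: "i < d"
          have "N (\<lambda>j. lam (Suc i) * indicator {n i<..m (Suc i)} j)
              = \<bar>lam (Suc i)\<bar> * N (indicator {n i<..m (Suc i)})"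
            by (rule scale, rule fsv_ind[of _ "m (Suc i)"]) auto
          moreover have "N (indicator {n i<..m (Suc i)}) \<le> psi N (m (Suc i))" by (rule indle) auto
          ultimately show "N (\<lambda>j. lam (Suc i) * indicator {n (Suc i - 1)<..m (Suc i)} j)
            \<le> \<bar>lam (Suc i)\<bar> * psi N (m (Suc i))" by (simp add: mult_left_mono)
        qed
        show "\<forall>i<d. 0 \<le> N (\<lambda>j. lam (Suc i) * indicator {n (Suc i - 1)<..m (Suc i)} j)"
          using by1(3)[OF c2] Nnn by auto
        show "\<forall>i<d. 0 \<le> \<bar>lam (Suc i)\<bar> * psi N (m (Suc i))" using psi0 by simp
        show "N (vsum d (\<lambda>i j. lam (Suc i) * indicator ({n (Suc i - 1)<..n (Suc i)} \<inter> Q) j)) \<le> 1"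
          using S bx1(2)[OF c1] by simp
      qed
      then show "N (\<lambda>i. \<Sum>s=1..d. lam s * indicator {n (s - 1)<..m s} i) \<le> \<epsilon> / 4"
        using by1(2)[OF c2] by simp
    next
      assume S: "N (\<lambda>i. \<Sum>s=1..d. lam s * indicator ({m (s - 1)<..m s} \<inter> Q) i) \<le> 1"
      have "N (vsum d (\<lambda>i j. lam (Suc i) * indicator {m (Suc i - 1)<..n (Suc i - 1)} j)) \<le> \<epsilon> / 4"
      proof (rule core[OF pq low up eps d bx2(1)[OF c3] by2(1)[OF c4],
            where A = "\<lambda>i. \<bar>lam (Suc i)\<bar> * psi N (n i)"], unfold D_def[symmetric] K_def[symmetric])
        show "\<forall>i<d. K * (\<bar>lam (Suc i)\<bar> * psi N (n i))
           \<le> N (\<lambda>j. lam (Suc i) * indicator ({m (Suc i - 1)<..m (Suc i)} \<inter> Q) j)"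
        proof (intro allI impI)
          fix i assume i: "i < d"
          have si: "Suc i \<in> {1..d}" using i by auto
          have kb: "K * psi N (n i) \<le> N (indicator ({m i<..m (Suc i)} \<inter> Q))"
          proof (cases "i = 0")
            case True
            have "psi N 0 = 0" unfolding psi_def using norm
              by (simp add: is_norm_c00_def fsvec_def indicator_def fun_eq_iff)
            have "fsvec (indicator ({m 0<..m (Suc 0)} \<inter> Q))" by (rule fsv_ind[of _ "m (Suc 0)"]) auto
            then show ?thesis using True n0 Nnn \<open>psi N 0 = 0\<close> by simp
          next
            case False
            then have si': "i \<in> {1..d}" using i by auto
            show ?thesis
              using qblock[OF Q, of "m i" "n i" "m (Suc i)"] ord[rule_format, OF si] rng[rule_format, OF si]
                ord[rule_format, OF si'] rng[rule_format, OF si'] by simp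
          qed
          moreover have "N (\<lambda>j. lam (Suc i) * indicator ({m i<..m (Suc i)} \<inter> Q) j)
              = \<bar>lam (Suc i)\<bar> * N (indicator ({m i<..m (Suc i)} \<inter> Q))"
            by (rule scale, rule fsv_ind[of _ "m (Suc i)"]) auto
          ultimately show "K * (\<bar>lam (Suc i)\<bar> * psi N (n i))
           \<le> N (\<lambda>j. lam (Suc i) * indicator ({m (Suc i - 1)<..m (Suc i)} \<inter> Q) j)"
            using mult_left_mono[OF kb abs_ge_zero] by (simp add: mult.left_commute)
        qed
        show "\<forall>i<d. N (\<lambda>j. lam (Suc i) * indicator {m (Suc i - 1)<..n (Suc i - 1)} j)
            \<le> \<bar>lam (Suc i)\<bar> * psi N (n i)"
        proof (intro allI impI)
          fix i assume i: "i < d"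
          have "N (\<lambda>j. lam (Suc i) * indicator {m i<..n i} j)
              = \<bar>lam (Suc i)\<bar> * N (indicator {m i<..n i})"
            by (rule scale, rule fsv_ind[of _ "n i"]) auto
          moreover have "N (indicator {m i<..n i}) \<le> psi N (n i)" by (rule indle) auto
          ultimately show "N (\<lambda>j. lam (Suc i) * indicator {m (Suc i - 1)<..n (Suc i - 1)} j)
            \<le> \<bar>lam (Suc i)\<bar> * psi N (n i)" by (simp add: mult_left_mono)
        qed
        show "\<forall>i<d. 0 \<le> N (\<lambda>j. lam (Suc i) * indicator {m (Suc i - 1)<..n (Suc i - 1)} j)"
          using by2(3)[OF c4] Nnn by auto
        show "\<forall>i<d. 0 \<le> \<bar>lam (Suc i)\<bar> * psi N (n i)" using psi0 by simp
        show "N (vsum d (\<lambda>i j. lam (Suc i) * indicator ({m (Suc i - 1)<..m (Suc i)} \<inter> Q) j)) \<le> 1"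
          using S bx2(2)[OF c3] by simp
      qed
      then show "N (\<lambda>i. \<Sum>s=1..d. lam s * indicator {m (s - 1)<..n (s - 1)} i) \<le> \<epsilon> / 4"
        using by2(2)[OF c4] by simp
    qed
  qed
qed

end
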